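(* Let $S$ be an $E$-unitary inverse semigroup, $\theta=(\{X_s\}_{s\in S},\{\theta_s\}_{s\in S})$ a topological partial action of $S$ on a topological space $X$, and $\widetilde\theta=(\{X_\gamma\}_{\gamma\in\mathbf{G}(S)},\{\widetilde\theta_\gamma\}_{\gamma\in\mathbf{G}(S)})$ the unique partial action of $\mathbf{G}(S)$ on $X$ with $X_\gamma=\bigcup_{[s]=\gamma}X_s$ and $\widetilde\theta_{[s]}(x)=\theta_s(x)$ for all $s\in S$, $x\in X_{s^*}$. Then $\theta$ is topologically principal if and only if $\widetilde\theta$ is topologically principal.
   Context: Inverse semigroups: $E(S)$ idempotents, $s\le t$ iff $s=ts^*s$; $S$ is $E$-unitary if $e\le s$ with $e\in E(S)$ implies $s\in E(S)$. $\mathbf{G}(S)=S/\!\sim$, $s\sim t$ iff some $u$ has $u\le s,t$; $[s]$ the class of $s$. A topological partial action of an inverse semigroup (in particular of a group) on $X$: open $X_s$, homeomorphisms $\theta_s:X_{s^*}\to X_s$ with $s\mapsto\theta_s$ a partial homomorphism into the inverse semigroup of partial bijections of $X$, and $X=\bigcup_{e\in E(S)}X_e$. With $S_x=\{s:x\in X_{s^*}\}$, $\Lambda(\theta)$ is the set of $x$ such that every $s\in S_x$ with $\theta_s(x)=x$ admits $e\in E(S)\cap S_x$, $e\le s$; topologically principal means $\Lambda(\theta)$ dense in $X$. For a group the only idempotent is the identity, so this says $\theta_g(x)=x$ forces $g=1$. *)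

theory Defs
  imports "HOL-Analysis.Analysis"
begin

definition inverse_semigroup :: "('s::semigroup_mult \<Rightarrow> 's) \<Rightarrow> bool" where
  "inverse_semigroup star \<longleftrightarrow>
     (\<forall>s. s * star s * s = s \<and> star s * s * star s = star s) \<and>
     (\<forall>s t. s * t * s = s \<and> t * s * t = t \<longrightarrow> t = star s)"

definition idempotents :: "'s::semigroup_mult set" where
  "idempotents = {e. e * e = e}"

definition nat_le :: "('s::semigroup_mult \<Rightarrow> 's) \<Rightarrow> 's \<Rightarrow> 's \<Rightarrow> bool" where
  "nat_le star s t \<longleftrightarrow> s = t * star s * s"

definition E_unitary :: "('s::semigroup_mult \<Rightarrow> 's) \<Rightarrow> bool" where
  "E_unitary star \<longleftrightarrow>
     (\<forall>e s. e \<in> idempotents \<and> nat_le star e s \<longrightarrow> s \<in> idempotents)"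

definition sim_rel :: "('s::semigroup_mult \<Rightarrow> 's) \<Rightarrow> 's \<Rightarrow> 's \<Rightarrow> bool" where
  "sim_rel star s t \<longleftrightarrow> (\<exists>u. nat_le star u s \<and> nat_le star u t)"

definition G_class :: "('s::semigroup_mult \<Rightarrow> 's) \<Rightarrow> 's \<Rightarrow> 's set" where
  "G_class star s = {t. sim_rel star s t}"

definition G_carrier :: "('s::semigroup_mult \<Rightarrow> 's) \<Rightarrow> 's set set" where
  "G_carrier star = range (G_class star)"

definition G_inv :: "('s::semigroup_mult \<Rightarrow> 's) \<Rightarrow> 's set \<Rightarrow> 's set" where
  "G_inv star \<gamma> = star ` \<gamma>"

definition G_one :: "('s::semigroup_mult \<Rightarrow> 's) \<Rightarrow> 's set" where
  "G_one star = G_class star (SOME e. e \<in> idempotents)"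

text \<open>Partial homomorphism into the inverse semigroup of partial bijections:
\<theta>_{s*} = \<theta>_s^{-1} and \<theta>_s \<theta>_t \<le> \<theta>_{st} (the latter as an extension of partial maps).\<close>

definition top_partial_action ::
  "'x topology \<Rightarrow> ('s::semigroup_mult \<Rightarrow> 's) \<Rightarrow> ('s \<Rightarrow> 'x set) \<Rightarrow> ('s \<Rightarrow> 'x \<Rightarrow> 'x) \<Rightarrow> bool" where
  "top_partial_action T star Xd th \<longleftrightarrow>
     (\<forall>s. openin T (Xd s)) \<and>
     (\<forall>s. homeomorphic_map (subtopology T (Xd (star s))) (subtopology T (Xd s)) (th s)) \<and>
     (\<forall>s x. x \<in> Xd (star s) \<longrightarrow> th (star s) (th s x) = x) \<and>
     (\<forall>s t x. x \<in> Xd (star t) \<and> th t x \<in> Xd (star s) \<longrightarrow>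
         x \<in> Xd (star (s * t)) \<and> th (s * t) x = th s (th t x)) \<and>
     topspace T = (\<Union>e\<in>idempotents. Xd e)"

definition Lambda_set ::
  "'x topology \<Rightarrow> ('s::semigroup_mult \<Rightarrow> 's) \<Rightarrow> ('s \<Rightarrow> 'x set) \<Rightarrow> ('s \<Rightarrow> 'x \<Rightarrow> 'x) \<Rightarrow> 'x set" where
  "Lambda_set T star Xd th =
     {x \<in> topspace T. \<forall>s. x \<in> Xd (star s) \<and> th s x = x \<longrightarrow>
        (\<exists>e. e \<in> idempotents \<and> x \<in> Xd (star e) \<and> nat_le star e s)}"

definition top_principal ::
  "'x topology \<Rightarrow> ('s::semigroup_mult \<Rightarrow> 's) \<Rightarrow> ('s \<Rightarrow> 'x set) \<Rightarrow> ('s \<Rightarrow> 'x \<Rightarrow> 'x) \<Rightarrow> bool" where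
  "top_principal T star Xd th \<longleftrightarrow> T closure_of (Lambda_set T star Xd th) = topspace T"

definition Lambda_grp ::
  "'x topology \<Rightarrow> 'g set \<Rightarrow> 'g \<Rightarrow> ('g \<Rightarrow> 'g) \<Rightarrow> ('g \<Rightarrow> 'x set) \<Rightarrow> ('g \<Rightarrow> 'x \<Rightarrow> 'x) \<Rightarrow> 'x set" where
  "Lambda_grp T G one ginv Xg thg =
     {x \<in> topspace T. \<forall>g\<in>G. x \<in> Xg (ginv g) \<and> thg g x = x \<longrightarrow> g = one}"

definition top_principal_grp ::
  "'x topology \<Rightarrow> 'g set \<Rightarrow> 'g \<Rightarrow> ('g \<Rightarrow> 'g) \<Rightarrow> ('g \<Rightarrow> 'x set) \<Rightarrow> ('g \<Rightarrow> 'x \<Rightarrow> 'x) \<Rightarrow> bool" where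
  "top_principal_grp T G one ginv Xg thg \<longleftrightarrow>
     T closure_of (Lambda_grp T G one ginv Xg thg) = topspace T"

definition tilde_dom :: "('s \<Rightarrow> 'x set) \<Rightarrow> 's set \<Rightarrow> 'x set" where
  "tilde_dom Xd \<gamma> = (\<Union>s\<in>\<gamma>. Xd s)"

definition tilde_act ::
  "('s::semigroup_mult \<Rightarrow> 's) \<Rightarrow> ('s \<Rightarrow> 'x set) \<Rightarrow> ('s \<Rightarrow> 'x \<Rightarrow> 'x) \<Rightarrow> 's set \<Rightarrow> 'x \<Rightarrow> 'x" where
  "tilde_act star Xd th \<gamma> x = th (SOME s. s \<in> \<gamma> \<and> x \<in> Xd (star s)) x"

end

theory Submission
  imports Defs
begin

locale invs =
  fixes star :: "'s::semigroup_mult \<Rightarrow> 's"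
  assumes IS: "inverse_semigroup star"
begin

lemma ax1: "s * star s * s = s" and ax2: "star s * s * star s = star s"
  using IS unfolding inverse_semigroup_def by auto

lemma uniq: "s * t * s = s \<Longrightarrow> t * s * t = t \<Longrightarrow> t = star s"
  using IS unfolding inverse_semigroup_def by auto

lemma ax1a: "s * (star s * (s * x)) = s * x"
  using arg_cong[OF ax1, of "\<lambda>y. y * x"] by (simp add: mult.assoc)
lemma ax2a: "star s * (s * (star s * x)) = star s * x"
  using arg_cong[OF ax2, of "\<lambda>y. y * x"] by (simp add: mult.assoc)
lemma idem_left: "(e::'s) \<in> idempotents \<Longrightarrow> e * (e * x) = e * x"
  unfolding idempotents_def by (simp add: mult.assoc[symmetric])

lemma star_star: "star (star s) = s"
  using uniq[of "star s" s] ax1 ax2 by simp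

lemma idem_star: "(e::'s) \<in> idempotents \<Longrightarrow> star e = e"
  using uniq[of e e] unfolding idempotents_def by simp

lemma idem1: "s * star s \<in> idempotents" and idem2: "star s * s \<in> idempotents"
  unfolding idempotents_def using ax1a ax2a by (simp_all add: mult.assoc)

lemma idem_mult: assumes e: "(e::'s) \<in> idempotents" and f: "f \<in> idempotents"
  shows "e * f \<in> idempotents"
proof -
  have ee: "e * e = e" and ff: "f * f = f" using e f by (auto simp: idempotents_def)
  define z where "z = star (e * f)"
  have "(e * f) * (f * z * e) * (e * f) = e * f"
  proof -
    have "(e * f) * (f * z * e) * (e * f) = e * (f * f) * z * (e * e) * f"
      by (simp add: mult.assoc)
    also have "\<dots> = (e * f) * z * (e * f)" using ee ff by (simp add: mult.assoc)
    also have "\<dots> = e * f" unfolding z_def by (rule ax1)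
    finally show ?thesis .
  qed
  moreover have "(f * z * e) * (e * f) * (f * z * e) = f * z * e"
  proof -
    have "(f * z * e) * (e * f) * (f * z * e) = f * (z * (e * e) * (f * f) * z) * e"
      by (simp add: mult.assoc)
    also have "\<dots> = f * (z * (e * f) * z) * e" using ee ff by (simp add: mult.assoc)
    also have "z * (e * f) * z = z" unfolding z_def by (rule ax2)
    finally show ?thesis by (simp add: mult.assoc)
  qed
  ultimately have fze: "f * z * e = z" using uniq[of "e * f" "f * z * e"] unfolding z_def by simp
  have "z * z = (f * z * e) * (f * z * e)" using fze by simp
  also have "\<dots> = f * z * (e * f) * z * e" by (simp add: mult.assoc)
  also have "\<dots> = f * (z * (e * f) * z) * e" by (simp add: mult.assoc)
  also have "\<dots> = z" using fze unfolding z_def by (simp add: ax2)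
  finally have "z \<in> idempotents" by (simp add: idempotents_def)
  hence "star z = z" by (rule idem_star)
  hence "z = e * f" unfolding z_def by (simp add: star_star)
  thus ?thesis using \<open>z \<in> idempotents\<close> by simp
qed

lemma idem_comm: assumes e: "(e::'s) \<in> idempotents" and f: "f \<in> idempotents"
  shows "e * f = f * e"
proof -
  have ee: "e * e = e" and ff: "f * f = f" using e f by (auto simp: idempotents_def)
  have ef: "e * f \<in> idempotents" and fe: "f * e \<in> idempotents" using idem_mult e f by auto
  have efe: "e * f * e * f = e * f" and fef: "f * e * f * e = f * e"
    using ef fe by (auto simp: idempotents_def mult.assoc)
  have "(e * f) * (f * e) * (e * f) = e * f"
    using ee ff efe idem_left[OF e] idem_left[OF f] by (simp add: mult.assoc)
  moreover have "(f * e) * (e * f) * (f * e) = f * e"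
    using ee ff fef idem_left[OF e] idem_left[OF f] by (simp add: mult.assoc)
  ultimately have "f * e = star (e * f)" by (rule uniq)
  thus ?thesis using idem_star[OF ef] by simp
qed

lemma le_refl: "nat_le star s s" unfolding nat_le_def by (simp add: ax1)

lemma le_idem: assumes "nat_le star u e" "(e::'s) \<in> idempotents" shows "u \<in> idempotents"
proof -
  have "u = e * (star u * u)" using assms(1) unfolding nat_le_def by (simp add: mult.assoc)
  thus ?thesis using idem_mult[OF assms(2) idem2, of u] by simp
qed

lemma le_prod1: assumes e: "(e::'s) \<in> idempotents" and f: "f \<in> idempotents"
  shows "nat_le star (e * f) e" "nat_le star (e * f) f"
proof -
  have ef: "e * f \<in> idempotents" using idem_mult e f by auto
  have ee: "e * e = e" and ff: "f * f = f" using e f by (auto simp: idempotents_def)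
  have efef: "e * f * (e * f) = e * f" using ef by (simp add: idempotents_def)
  show "nat_le star (e * f) e" unfolding nat_le_def idem_star[OF ef]
    using efef idem_left[OF e] by (simp add: mult.assoc)
  have "f * (e * f) = f * (f * e)" using idem_comm[OF e f] by simp
  also have "\<dots> = f * e" using idem_left[OF f] by simp
  also have "\<dots> = e * f" using idem_comm[OF e f] by simp
  finally show "nat_le star (e * f) f" unfolding nat_le_def idem_star[OF ef]
    using efef by (simp add: mult.assoc)
qed

lemma ax1b: "s * (star s * s) = s" using ax1 by (simp add: mult.assoc)
lemma ax2b: "star s * (s * star s) = star s" using ax2 by (simp add: mult.assoc)

lemma star_mult: "star (s * t) = star t * star s"
proof -
  have c: "(t * star t) * (star s * s) = (star s * s) * (t * star t)"
    by (rule idem_comm[OF idem1 idem2])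
  have "(s * t) * (star t * star s) * (s * t) = s * ((t * star t) * (star s * s)) * t"
    by (simp add: mult.assoc)
  also have "\<dots> = s * t" unfolding c by (simp add: mult.assoc ax1a ax1b)
  finally have 1: "(s * t) * (star t * star s) * (s * t) = s * t" .
  have "(star t * star s) * (s * t) * (star t * star s)
      = star t * ((star s * s) * (t * star t)) * star s"
    by (simp add: mult.assoc)
  also have "\<dots> = star t * star s" unfolding c[symmetric] by (simp add: mult.assoc ax2a ax2b)
  finally have 2: "(star t * star s) * (s * t) * (star t * star s) = star t * star s" .
  show ?thesis using uniq[OF 1 2] by simp
qed

lemma sim_sym: "sim_rel star s t \<Longrightarrow> sim_rel star t s"
  unfolding sim_rel_def by blast

lemma sim_idem: assumes EU: "E_unitary star" and st: "sim_rel star s t" and t: "t \<in> idempotents"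
  shows "s \<in> idempotents"
proof -
  obtain u where u1: "nat_le star u s" and u2: "nat_le star u t" using st unfolding sim_rel_def by blast
  have "u \<in> idempotents" using le_idem[OF u2 t] .
  then show ?thesis using EU u1 unfolding E_unitary_def by blast
qed

lemma sim_compat: assumes EU: "E_unitary star" and st: "sim_rel star s t"
  shows "s * star t \<in> idempotents"
proof -
  obtain u where u1: "u = s * (star u * u)" and u2: "u = t * (star u * u)"
    using st unfolding sim_rel_def nat_le_def by (auto simp: mult.assoc)
  have uu: "u * star u = t * star u"
  proof -
    have "u * star u = t * (star u * u * star u)" using u2 by (metis mult.assoc)
    also have "\<dots> = t * star u" by (simp add: ax2)
    finally show ?thesis .
  qed
  have ut: "u * (star t * t) = u"
  proof -
    have "u * (star t * t) = t * ((star u * u) * (star t * t))" using u2 by (metis mult.assoc)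
    also have "\<dots> = t * ((star t * t) * (star u * u))" by (simp add: idem_comm[OF idem2 idem2])
    also have "\<dots> = t * (star u * u)" by (simp add: mult.assoc ax1a)
    finally show ?thesis using u2 by simp
  qed
  have "s * star t * (u * star u) = s * star t * (t * star u)" by (simp add: uu)
  also have "\<dots> = s * ((star t * t) * (star u * u)) * star u"
    by (simp add: mult.assoc ax2a ax2b)
  also have "\<dots> = s * ((star u * u) * (star t * t)) * star u"
    by (simp add: idem_comm[OF idem2 idem2])
  also have "\<dots> = (s * (star u * u)) * (star t * t) * star u"
    by (simp add: mult.assoc)
  also have "\<dots> = u * star u" using u1 ut by simp
  finally have e: "s * star t * (u * star u) = u * star u" .
  have ui: "u * star u \<in> idempotents" by (rule idem1)
  have "nat_le star (u * star u) (s * star t)"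
    unfolding nat_le_def idem_star[OF ui] using ui e
    by (simp add: idempotents_def mult.assoc[symmetric])
  then show ?thesis using EU ui unfolding E_unitary_def by blast
qed

lemma compat_eq: assumes e: "s * star t \<in> idempotents"
  shows "s * (star t * t) = t * (star s * s)"
proof -
  have ts: "t * star s = s * star t" using idem_star[OF e] star_mult[of s "star t"]
    by (simp add: star_star)
  have "s * (star t * t) = s * ((star s * s) * (star t * t))" by (simp add: mult.assoc ax1a)
  also have "\<dots> = s * ((star t * t) * (star s * s))" by (simp add: idem_comm[OF idem2 idem2])
  also have "\<dots> = (s * star t) * (t * star s) * s" by (simp add: mult.assoc)
  also have "\<dots> = (s * star t) * (s * star t) * s" by (simp add: ts)
  also have "\<dots> = (t * star s) * s" using e ts by (simp add: idempotents_def)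
  finally show ?thesis by (simp add: mult.assoc)
qed

lemma class_idem: assumes EU: "E_unitary star" and s: "s \<in> idempotents"
  shows "G_class star s = idempotents"
proof
  show "G_class star s \<subseteq> idempotents"
    using sim_idem[OF EU _ s] sim_sym unfolding G_class_def by blast
  show "idempotents \<subseteq> G_class star s"
  proof
    fix t :: 's assume t: "t \<in> idempotents"
    have "nat_le star (s * t) s" "nat_le star (s * t) t" using le_prod1[OF s t] by auto
    then show "t \<in> G_class star s" unfolding G_class_def sim_rel_def by blast
  qed
qed

lemma G_one_eq: assumes EU: "E_unitary star" shows "G_one star = idempotents"
proof -
  have "\<exists>e. e \<in> (idempotents :: 's set)" using idem1 by blast
  then have "(SOME e. e \<in> (idempotents :: 's set)) \<in> idempotents" by (rule someI_ex)
  then show ?thesis unfolding G_one_def by (rule class_idem[OF EU])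
qed

lemma self_class: "s \<in> G_class star s"
  unfolding G_class_def sim_rel_def using le_refl by blast

end

lemma act_img:
  assumes A: "top_partial_action T star Xd th" and x: "x \<in> Xd (star t)"
  shows "th t x \<in> Xd t"
proof -
  have h: "homeomorphic_map (subtopology T (Xd (star t))) (subtopology T (Xd t)) (th t)"
    using A unfolding top_partial_action_def by blast
  have o: "openin T (Xd (star t))" using A unfolding top_partial_action_def by blast
  have "x \<in> topspace (subtopology T (Xd (star t)))" using x openin_subset[OF o] by auto
  hence "th t x \<in> topspace (subtopology T (Xd t))"
    using homeomorphic_imp_surjective_map[OF h] by blast
  thus ?thesis by simp
qed

lemma (in invs) act_agree:
  assumes A: "top_partial_action T star Xd th" and e: "s * star t \<in> idempotents"
    and xs: "x \<in> Xd (star s)" and xt: "x \<in> Xd (star t)"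
  shows "th s x = th t x"
proof -
  have comp: "\<And>a b y. y \<in> Xd (star b) \<Longrightarrow> th b y \<in> Xd (star a) \<Longrightarrow>
      y \<in> Xd (star (a * b)) \<and> th (a * b) y = th a (th b y)"
    using A unfolding top_partial_action_def by blast
  have inv: "\<And>a y. y \<in> Xd (star a) \<Longrightarrow> th (star a) (th a y) = y"
    using A unfolding top_partial_action_def by blast
  have idp: "\<And>a. x \<in> Xd (star a) \<Longrightarrow> x \<in> Xd (star (star a * a)) \<and> th (star a * a) x = x"
  proof -
    fix a assume xa: "x \<in> Xd (star a)"
    have "th a x \<in> Xd (star (star a))" using act_img[OF A xa] by (simp add: star_star)
    from comp[OF xa this] inv[OF xa] show "x \<in> Xd (star (star a * a)) \<and> th (star a * a) x = x"
      by simp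
  qed
  have 1: "th (s * (star t * t)) x = th s x"
    using comp[of x "star t * t" s] idp[OF xt] xs by simp
  have 2: "th (t * (star s * s)) x = th t x"
    using comp[of x "star s * s" t] idp[OF xs] xt by simp
  show ?thesis using 1 2 compat_eq[OF e] by simp
qed

theorem proposition7p10:
  fixes T :: "'x topology"
    and star :: "'s::semigroup_mult \<Rightarrow> 's"
    and Xd :: "'s \<Rightarrow> 'x set"
    and th :: "'s \<Rightarrow> 'x \<Rightarrow> 'x"
  assumes "inverse_semigroup star"
    and "E_unitary star"
    and "top_partial_action T star Xd th"
  shows "top_principal T star Xd th \<longleftrightarrow>
         top_principal_grp T (G_carrier star) (G_one star) (G_inv star)
           (tilde_dom Xd) (tilde_act star Xd th)"
proof -
  interpret invs star by unfold_locales (rule assms(1))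
  note EU = assms(2) and A = assms(3)
  have LS: "Lambda_set T star Xd th =
      {x \<in> topspace T. \<forall>s. x \<in> Xd (star s) \<and> th s x = x \<longrightarrow> s \<in> idempotents}"
    unfolding Lambda_set_def
  proof (intro Collect_cong conj_cong refl iffI allI impI)
    fix x s
    assume H: "\<forall>s. x \<in> Xd (star s) \<and> th s x = x \<longrightarrow>
        (\<exists>e. e \<in> idempotents \<and> x \<in> Xd (star e) \<and> nat_le star e s)"
      and P: "x \<in> Xd (star s) \<and> th s x = x"
    then obtain e where "e \<in> idempotents" "nat_le star e s" by blast
    then show "s \<in> idempotents" using EU unfolding E_unitary_def by blast
  next
    fix x s
    assume H: "\<forall>s. x \<in> Xd (star s) \<and> th s x = x \<longrightarrow> s \<in> idempotents"
      and P: "x \<in> Xd (star s) \<and> th s x = x"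
    then have "s \<in> idempotents" by blast
    then show "\<exists>e. e \<in> idempotents \<and> x \<in> Xd (star e) \<and> nat_le star e s"
      using P le_refl by blast
  qed
  have LG: "Lambda_grp T (G_carrier star) (G_one star) (G_inv star) (tilde_dom Xd) (tilde_act star Xd th)
     = {x \<in> topspace T. \<forall>s. x \<in> Xd (star s) \<and> th s x = x \<longrightarrow> s \<in> idempotents}"
    unfolding Lambda_grp_def G_one_eq[OF EU]
  proof (intro Collect_cong conj_cong refl iffI allI impI ballI)
    fix x s
    assume H: "\<forall>g\<in>G_carrier star. x \<in> tilde_dom Xd (G_inv star g) \<and> tilde_act star Xd th g x = x
        \<longrightarrow> g = idempotents"
      and P: "x \<in> Xd (star s) \<and> th s x = x"
    let ?g = "G_class star s"
    have gc: "?g \<in> G_carrier star" unfolding G_carrier_def by simp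
    have sg: "s \<in> ?g" by (rule self_class)
    have dom: "x \<in> tilde_dom Xd (G_inv star ?g)"
      unfolding tilde_dom_def G_inv_def using sg P by blast
    have "\<exists>t. t \<in> ?g \<and> x \<in> Xd (star t)" using sg P by blast
    then have t0: "(SOME t. t \<in> ?g \<and> x \<in> Xd (star t)) \<in> ?g \<and>
        x \<in> Xd (star (SOME t. t \<in> ?g \<and> x \<in> Xd (star t)))" by (rule someI_ex)
    define t where "t = (SOME t. t \<in> ?g \<and> x \<in> Xd (star t))"
    have tg: "t \<in> ?g" and xt: "x \<in> Xd (star t)" using t0 unfolding t_def by auto
    have "sim_rel star s t" using tg unfolding G_class_def by simp
    then have "s * star t \<in> idempotents" by (rule sim_compat[OF EU])
    then have "th s x = th t x" using act_agree[OF A _ _ xt] P by blast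
    then have "tilde_act star Xd th ?g x = x" unfolding tilde_act_def t_def[symmetric] using P by simp
    then have "?g = idempotents" using H gc dom by blast
    then show "s \<in> idempotents" using sg by simp
  next
    fix x g
    assume H: "\<forall>s. x \<in> Xd (star s) \<and> th s x = x \<longrightarrow> s \<in> idempotents"
      and gc: "g \<in> G_carrier star"
      and P: "x \<in> tilde_dom Xd (G_inv star g) \<and> tilde_act star Xd th g x = x"
    obtain s where gs: "g = G_class star s" using gc unfolding G_carrier_def by blast
    have "\<exists>t. t \<in> g \<and> x \<in> Xd (star t)"
      using P unfolding tilde_dom_def G_inv_def by blast
    then have t0: "(SOME t. t \<in> g \<and> x \<in> Xd (star t)) \<in> g \<and>
        x \<in> Xd (star (SOME t. t \<in> g \<and> x \<in> Xd (star t)))" by (rule someI_ex)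
    define t where "t = (SOME t. t \<in> g \<and> x \<in> Xd (star t))"
    have tg: "t \<in> g" and xt: "x \<in> Xd (star t)" using t0 unfolding t_def by auto
    have "th t x = x" using P unfolding tilde_act_def t_def by simp
    then have ti: "t \<in> idempotents" using H xt by blast
    have "sim_rel star s t" using tg gs unfolding G_class_def by simp
    then have "s \<in> idempotents" using sim_idem[OF EU _ ti] by blast
    then show "g = idempotents" using gs class_idem[OF EU] by simp
  qed
  show ?thesis unfolding top_principal_def top_principal_grp_def LS LG ..
qed

end
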